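(* Let $R$ be a commutative coherent ring and $0\to A\to B\to C\to 0$ an exact sequence of $R$-modules with $A$ absolutely $w$-pure. Then $B$ is absolutely $w$-pure if and only if $C$ is absolutely $w$-pure.
   Context: A ring is coherent if every finitely generated ideal is finitely presented. A $GV$-ideal of $R$ is a finitely generated ideal $J$ such that the natural map $R\to\mathrm{Hom}_R(J,R)$ is an isomorphism; $GV(R)$ is the set of $GV$-ideals. An $R$-module $X$ is $GV$-torsion if every $x\in X$ satisfies $Jx=0$ for some $J\in GV(R)$. An $R$-module $A$ is absolutely $w$-pure if $\mathrm{Ext}^1_R(N,A)$ is $GV$-torsion for every finitely presented $R$-module $N$. *)

theory Defs
  imports Complex_Main
begin

(* The ring R is the type 'r :: comm_ring_1; R-modules are types with a scalar
   multiplication satisfying the locale "module" of HOL/Modules. *)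

definition is_ideal :: "'r::comm_ring_1 set \<Rightarrow> bool" where
  "is_ideal I \<longleftrightarrow> 0 \<in> I \<and> (\<forall>x\<in>I. \<forall>y\<in>I. x + y \<in> I) \<and> (\<forall>r. \<forall>x\<in>I. r * x \<in> I)"

definition ideal_generated_by :: "'r::comm_ring_1 set \<Rightarrow> nat \<Rightarrow> (nat \<Rightarrow> 'r) \<Rightarrow> bool" where
  "ideal_generated_by I n g \<longleftrightarrow> I = {(\<Sum>i<n. c i * g i) | c. True}"

definition fin_gen_ideal :: "'r::comm_ring_1 set \<Rightarrow> bool" where
  "fin_gen_ideal I \<longleftrightarrow> (\<exists>n g. ideal_generated_by I n g)"

(* finitely presented: some finite generating system g of I whose module of
   relations (a submodule of R^n) is finitely generated *)
definition fin_pres_ideal :: "'r::comm_ring_1 set \<Rightarrow> bool" where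
  "fin_pres_ideal I \<longleftrightarrow> (\<exists>n g. ideal_generated_by I n g \<and>
     (\<exists>m (rel :: nat \<Rightarrow> nat \<Rightarrow> 'r). (\<forall>j<m. \<forall>i\<ge>n. rel j i = 0) \<and>
        {c :: nat \<Rightarrow> 'r. (\<forall>i\<ge>n. c i = 0) \<and> (\<Sum>i<n. c i * g i) = 0}
          = {(\<lambda>i. \<Sum>j<m. d j * rel j i) | d. True}))"

definition coherent_ring :: "'r::comm_ring_1 itself \<Rightarrow> bool" where
  "coherent_ring (t :: 'r itself) \<longleftrightarrow> (\<forall>I :: 'r set. is_ideal I \<and> fin_gen_ideal I \<longrightarrow> fin_pres_ideal I)"

definition ideal_linear :: "'r::comm_ring_1 set \<Rightarrow> ('r \<Rightarrow> 'r) \<Rightarrow> bool" where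
  "ideal_linear J \<phi> \<longleftrightarrow> (\<forall>x\<in>J. \<forall>y\<in>J. \<phi> (x + y) = \<phi> x + \<phi> y) \<and>
                        (\<forall>r. \<forall>x\<in>J. \<phi> (r * x) = r * \<phi> x)"

(* GV-ideal: finitely generated J with R \<rightarrow> Hom_R(J,R), r \<mapsto> (x \<mapsto> r x), bijective *)
definition GV_ideal :: "'r::comm_ring_1 set \<Rightarrow> bool" where
  "GV_ideal J \<longleftrightarrow> is_ideal J \<and> fin_gen_ideal J \<and>
     (\<forall>r s. (\<forall>x\<in>J. r * x = s * x) \<longrightarrow> r = s) \<and>
     (\<forall>\<phi>. ideal_linear J \<phi> \<longrightarrow> (\<exists>r. \<forall>x\<in>J. \<phi> x = r * x))"

(* The free module R^n, represented as functions nat \<Rightarrow> 'r vanishing from n on *)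
definition fvec :: "nat \<Rightarrow> (nat \<Rightarrow> 'r::comm_ring_1) set" where
  "fvec n = {v. \<forall>i\<ge>n. v i = 0}"

definition fg_submod :: "nat \<Rightarrow> (nat \<Rightarrow> 'r::comm_ring_1) set \<Rightarrow> bool" where
  "fg_submod n K \<longleftrightarrow> (\<exists>m (gen :: nat \<Rightarrow> nat \<Rightarrow> 'r). (\<forall>j<m. gen j \<in> fvec n) \<and>
      K = {(\<lambda>i. \<Sum>j<m. d j * gen j i) | d. True})"

definition lin_on :: "(nat \<Rightarrow> 'r::comm_ring_1) set \<Rightarrow> ('r \<Rightarrow> 'a::ab_group_add \<Rightarrow> 'a)
                      \<Rightarrow> ((nat \<Rightarrow> 'r) \<Rightarrow> 'a) \<Rightarrow> bool" where
  "lin_on K s f \<longleftrightarrow> (\<forall>x\<in>K. \<forall>y\<in>K. f (\<lambda>i. x i + y i) = f x + f y) \<and>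
                    (\<forall>r. \<forall>x\<in>K. f (\<lambda>i. r * x i) = s r (f x))"

(* Every finitely presented module is N = R^n/K with K f.g.; from
   0 \<rightarrow> K \<rightarrow> R^n \<rightarrow> N \<rightarrow> 0 and R^n projective:
   Ext^1(N,A) = Hom(K,A) / image of restriction Hom(R^n,A) \<rightarrow> Hom(K,A),
   and Hom(R^n,A) \<cong> A^n via x \<mapsto> \<Sum> x_i a_i.
   Ext^1(N,A) is GV-torsion iff each class [f] is killed by some GV-ideal J,
   i.e. for each r \<in> J, r f extends to R^n. *)
definition abs_w_pure :: "('r::comm_ring_1 \<Rightarrow> 'a::ab_group_add \<Rightarrow> 'a) \<Rightarrow> bool" where
  "abs_w_pure s \<longleftrightarrow> (\<forall>n (K :: (nat \<Rightarrow> 'r) set). fg_submod n K \<longrightarrow>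
     (\<forall>f. lin_on K s f \<longrightarrow>
        (\<exists>J. GV_ideal J \<and>
           (\<forall>r\<in>J. \<exists>a :: nat \<Rightarrow> 'a. \<forall>x\<in>K. s r (f x) = (\<Sum>i<n. s (x i) (a i))))))"

end

theory Submission
  imports Defs
begin

definition span_of :: "nat \<Rightarrow> (nat \<Rightarrow> 'r::comm_ring_1) \<Rightarrow> 'r set" where
  "span_of n g = {(\<Sum>i<n. c i * g i) | c. True}"

lemma igb_span: "ideal_generated_by I n g \<longleftrightarrow> I = span_of n g"
  by (simp add: ideal_generated_by_def span_of_def)

lemma span_ofI: "x = (\<Sum>i<n. c i * g i) \<Longrightarrow> x \<in> span_of n g"
  unfolding span_of_def by blast

lemma span_ofE: "x \<in> span_of n g \<Longrightarrow> (\<And>c. x = (\<Sum>i<n. c i * g i) \<Longrightarrow> P) \<Longrightarrow> P"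
  unfolding span_of_def by blast

lemma is_ideal_span: "is_ideal (span_of n g)"
  unfolding is_ideal_def
proof (intro conjI ballI allI)
  show "0 \<in> span_of n g" by (rule span_ofI[where c="\<lambda>_. 0"]) simp
next
  fix x y assume "x \<in> span_of n g" "y \<in> span_of n g"
  then obtain c d where "x = (\<Sum>i<n. c i * g i)" "y = (\<Sum>i<n. d i * g i)" by (metis span_ofE)
  then show "x + y \<in> span_of n g"
    by (intro span_ofI[where c="\<lambda>i. c i + d i"]) (simp add: sum.distrib distrib_right)
next
  fix r x assume "x \<in> span_of n g"
  then obtain c where "x = (\<Sum>i<n. c i * g i)" by (metis span_ofE)
  then show "r * x \<in> span_of n g"
    by (intro span_ofI[where c="\<lambda>i. r * c i"]) (simp add: sum_distrib_left mult.assoc)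
qed

lemma gen_in_span: "k < n \<Longrightarrow> g k \<in> span_of n g"
proof (rule span_ofI[where c="\<lambda>i. if i = k then 1 else 0"])
  assume "k < n"
  have "(\<Sum>i<n. (if i = k then 1 else 0) * g i) = (\<Sum>i<n. if i = k then g i else 0)"
    by (rule sum.cong) auto
  also have "\<dots> = g k" using \<open>k < n\<close> by (simp add: sum.delta)
  finally show "g k = (\<Sum>i<n. (if i = k then 1 else 0) * g i)" by simp
qed

lemma ideal_0: "is_ideal W \<Longrightarrow> 0 \<in> W" by (simp add: is_ideal_def)
lemma ideal_add: "is_ideal W \<Longrightarrow> x \<in> W \<Longrightarrow> y \<in> W \<Longrightarrow> x + y \<in> W" by (simp add: is_ideal_def)
lemma ideal_mult: "is_ideal W \<Longrightarrow> x \<in> W \<Longrightarrow> r * x \<in> W" by (simp add: is_ideal_def)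
lemma ideal_mult2: "is_ideal W \<Longrightarrow> x \<in> W \<Longrightarrow> x * r \<in> W" by (metis ideal_mult mult.commute)

lemma ideal_sum_gen: "finite A \<Longrightarrow> is_ideal W \<Longrightarrow> (\<forall>k\<in>A. f k \<in> W) \<Longrightarrow> sum f A \<in> W"
  by (induct A rule: finite_induct) (auto intro: ideal_0 ideal_add)

lemma ideal_sum: "is_ideal W \<Longrightarrow> (\<forall>k<(n::nat). G k \<in> W) \<Longrightarrow> (\<Sum>k<n. c k * G k) \<in> W"
proof -
  assume a: "is_ideal W" "\<forall>k<n. G k \<in> W"
  then have "\<forall>k\<in>{..<n}. c k * G k \<in> W" by (simp add: ideal_mult)
  then show ?thesis using ideal_sum_gen[of "{..<n}" W "\<lambda>k. c k * G k"] a by simp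
qed

lemma span_sub: "is_ideal W \<Longrightarrow> (\<forall>k<n. G k \<in> W) \<Longrightarrow> span_of n G \<subseteq> W"
  by (auto elim!: span_ofE intro: ideal_sum)

lemma span_mult_in: "is_ideal W \<Longrightarrow> (\<forall>a<n. g a * y \<in> W) \<Longrightarrow> x \<in> span_of n g \<Longrightarrow> x * y \<in> W"
proof (elim span_ofE)
  fix c assume W: "is_ideal W" "\<forall>a<n. g a * y \<in> W" and x: "x = (\<Sum>i<n. c i * g i)"
  have "x * y = (\<Sum>i<n. c i * (g i * y))" unfolding x by (simp add: sum_distrib_right mult.assoc)
  then show "x * y \<in> W" using ideal_sum[OF W] by simp
qed

lemma L1: "(\<forall>a<n. r * g a = s * g a) \<Longrightarrow> x \<in> span_of n g \<Longrightarrow> r * x = s * x"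
proof (elim span_ofE)
  fix c assume h: "\<forall>a<n. r * g a = s * g a" and x: "x = (\<Sum>i<n. c i * g i)"
  have "r * x = (\<Sum>i<n. c i * (r * g i))" unfolding x by (simp add: sum_distrib_left mult.left_commute)
  also have "\<dots> = (\<Sum>i<n. c i * (s * g i))" using h by simp
  also have "\<dots> = s * x" unfolding x by (simp add: sum_distrib_left mult.left_commute)
  finally show ?thesis .
qed

lemma lin_zero: "ideal_linear P \<phi> \<Longrightarrow> is_ideal P \<Longrightarrow> \<phi> 0 = 0"
  unfolding ideal_linear_def by (metis ideal_0 mult_zero_left)

lemma lin_sum: "finite A \<Longrightarrow> ideal_linear P \<phi> \<Longrightarrow> is_ideal P \<Longrightarrow> (\<forall>k\<in>A. f k \<in> P) \<Longrightarrow>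
   \<phi> (sum f A) = (\<Sum>k\<in>A. \<phi> (f k))"
proof (induct A rule: finite_induct)
  case empty then show ?case by (simp add: lin_zero)
next
  case (insert x F)
  have "sum f F \<in> P" using insert by (auto intro: ideal_sum_gen)
  then show ?case using insert unfolding ideal_linear_def by simp
qed

lemma L2: assumes "ideal_linear P \<phi>" "is_ideal P" "\<forall>k<N. G k \<in> P" "\<forall>k<N. \<phi> (G k) = c * G k"
  "z \<in> span_of N G" shows "\<phi> z = c * z"
  using assms(5)
proof (elim span_ofE)
  fix d assume z: "z = (\<Sum>i<N. d i * G i)"
  have "\<phi> z = (\<Sum>i<N. \<phi> (d i * G i))" unfolding z
    using assms by (intro lin_sum) (auto intro: ideal_mult)
  also have "\<dots> = (\<Sum>i<N. d i * (c * G i))" using assms unfolding ideal_linear_def by simp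
  also have "\<dots> = c * z" unfolding z by (simp add: sum_distrib_left mult.left_commute)
  finally show ?thesis .
qed

lemma GV_UNIV: "GV_ideal (UNIV :: 'r::comm_ring_1 set)"
  unfolding GV_ideal_def
proof (intro conjI allI impI)
  show "is_ideal (UNIV::'r set)" by (simp add: is_ideal_def)
  have "ideal_generated_by (UNIV::'r set) 1 (\<lambda>_. 1)"
    unfolding igb_span span_of_def by auto
  then show "fin_gen_ideal (UNIV::'r set)" unfolding fin_gen_ideal_def by blast
  fix r s :: 'r assume "\<forall>x\<in>UNIV. r * x = s * x" then show "r = s" by (metis UNIV_I mult.comm_neutral)
next
  fix \<phi> :: "'r \<Rightarrow> 'r" assume "ideal_linear UNIV \<phi>"
  then have "\<forall>x. \<phi> x = x * \<phi> 1" unfolding ideal_linear_def by (metis UNIV_I mult.right_neutral)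
  then show "\<exists>r. \<forall>x\<in>UNIV. \<phi> x = r * x" by (metis mult.commute)
qed

lemma GV_parts:
  assumes "GV_ideal I"
  shows "is_ideal I" "\<exists>n g. I = span_of n g"
    "\<And>r s. (\<forall>x\<in>I. r * x = s * x) \<Longrightarrow> r = s"
    "\<And>\<phi>. ideal_linear I \<phi> \<Longrightarrow> \<exists>r. \<forall>x\<in>I. \<phi> x = r * x"
  using assms unfolding GV_ideal_def fin_gen_ideal_def igb_span by blast+

lemma GV_intro:
  assumes "I = span_of n g"
    "\<And>r s. (\<forall>x\<in>I. r * x = s * x) \<Longrightarrow> r = s"
    "\<And>\<phi>. ideal_linear I \<phi> \<Longrightarrow> \<exists>r. \<forall>x\<in>I. \<phi> x = r * x"
  shows "GV_ideal I"
  using assms unfolding GV_ideal_def fin_gen_ideal_def igb_span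
  by (metis is_ideal_span)

lemma idx_lt: "(a::nat) < n \<Longrightarrow> b < m \<Longrightarrow> a * m + b < n * m"
proof -
  assume "a < n" "b < m"
  then have "Suc a * m \<le> n * m" by (intro mult_le_mono1) simp
  then show ?thesis using \<open>b < m\<close> by simp
qed

lemma GV_prod:
  fixes I J :: "'r::comm_ring_1 set"
  assumes GI: "GV_ideal I" and GJ: "GV_ideal J"
  shows "\<exists>P::'r set. GV_ideal P \<and> (\<forall>W. is_ideal W \<longrightarrow> (\<forall>x\<in>I. \<forall>y\<in>J. x * y \<in> W) \<longrightarrow> P \<subseteq> W)"
proof -
  obtain n g where I: "I = span_of n g" using GV_parts(2)[OF GI] by blast
  obtain m h where J: "J = span_of m h" using GV_parts(2)[OF GJ] by blast
  show ?thesis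
  proof (cases "m = 0")
    case True
    then have J0: "J = {0}" unfolding J span_of_def by simp
    show ?thesis
    proof (intro exI[of _ J] conjI allI impI)
      show "GV_ideal J" by fact
      fix W :: "'r set" assume "is_ideal W" then show "J \<subseteq> W" using J0 ideal_0 by blast
    qed
  next
    case False
    then have m0: "0 < m" by simp
    define Pg where "Pg k = g (k div m) * h (k mod m)" for k
    define P where "P = span_of (n * m) Pg"
    have iP: "is_ideal P" unfolding P_def by (rule is_ideal_span)
    have gens: "g a * h b \<in> P" if "a < n" "b < m" for a b
    proof -
      have "Pg (a * m + b) = g a * h b" unfolding Pg_def using that by simp
      moreover have "Pg (a * m + b) \<in> P" unfolding P_def
        by (rule gen_in_span) (rule idx_lt[OF that])
      ultimately show ?thesis by simp
    qed
    have gy: "g a * y \<in> P" if "a < n" "y \<in> J" for a y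
    proof -
      have "y * g a \<in> P"
        using span_mult_in[OF iP, of m h "g a" y] gens[OF that(1)] that(2) J
        by (simp add: mult.commute)
      then show ?thesis by (simp add: mult.commute)
    qed
    have xy: "x * y \<in> P" if "x \<in> I" "y \<in> J" for x y
      using span_mult_in[OF iP, of n g y x] gy that I by simp
    have inj: "r = s" if h: "\<forall>x\<in>P. r * x = s * x" for r s
    proof -
      have "r * g a = s * g a" if "a < n" for a
      proof -
        have "\<forall>b<m. (r * g a) * h b = (s * g a) * h b"
          using h gens[OF that] by (simp add: mult.assoc)
        then have "\<forall>y\<in>J. (r * g a) * y = (s * g a) * y" using L1[of m "r * g a" h "s * g a"] J by simp
        then show ?thesis by (rule GV_parts(3)[OF GJ])
      qed
      then have "\<forall>x\<in>I. r * x = s * x" using L1[of n r g s] I by simp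
      then show ?thesis by (rule GV_parts(3)[OF GI])
    qed
    have surj: "\<exists>c. \<forall>z\<in>P. \<phi> z = c * z" if lin: "ideal_linear P \<phi>" for \<phi>
    proof -
      have ex: "\<exists>s. \<forall>y\<in>J. \<phi> (x * y) = s * y" if "x \<in> I" for x
      proof (rule GV_parts(4)[OF GJ])
        show "ideal_linear J (\<lambda>y. \<phi> (x * y))"
          unfolding ideal_linear_def
        proof (intro conjI ballI allI)
          fix y y' assume "y \<in> J" "y' \<in> J"
          then show "\<phi> (x * (y + y')) = \<phi> (x * y) + \<phi> (x * y')"
            using lin xy[OF \<open>x \<in> I\<close>] unfolding ideal_linear_def by (simp add: distrib_left)
        next
          fix r y assume "y \<in> J"
          then show "\<phi> (x * (r * y)) = r * \<phi> (x * y)"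
            using lin xy[OF \<open>x \<in> I\<close>] unfolding ideal_linear_def by (simp add: mult.left_commute)
        qed
      qed
      define \<chi> where "\<chi> x = (SOME s. \<forall>y\<in>J. \<phi> (x * y) = s * y)" for x
      have chi: "\<forall>y\<in>J. \<phi> (x * y) = \<chi> x * y" if "x \<in> I" for x
        unfolding \<chi>_def using someI_ex[OF ex[OF that]] .
      have iI: "is_ideal I" by (rule GV_parts(1)[OF GI])
      have "ideal_linear I \<chi>"
        unfolding ideal_linear_def
      proof (intro conjI ballI allI)
        fix x x' assume xx: "x \<in> I" "x' \<in> I"
        then have "x + x' \<in> I" using iI ideal_add by blast
        have "\<forall>y\<in>J. \<chi> (x + x') * y = (\<chi> x + \<chi> x') * y"
        proof
          fix y assume "y \<in> J"
          have "\<chi> (x + x') * y = \<phi> ((x + x') * y)" using chi[OF \<open>x + x' \<in> I\<close>] \<open>y \<in> J\<close> by simp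
          also have "\<dots> = \<phi> (x * y) + \<phi> (x' * y)"
            using lin xy xx \<open>y \<in> J\<close> unfolding ideal_linear_def by (simp add: distrib_right)
          also have "\<dots> = (\<chi> x + \<chi> x') * y" using chi xx \<open>y \<in> J\<close> by (simp add: distrib_right)
          finally show "\<chi> (x + x') * y = (\<chi> x + \<chi> x') * y" .
        qed
        then show "\<chi> (x + x') = \<chi> x + \<chi> x'" by (rule GV_parts(3)[OF GJ])
      next
        fix r x assume xx: "x \<in> I"
        then have "r * x \<in> I" using iI ideal_mult by blast
        have "\<forall>y\<in>J. \<chi> (r * x) * y = (r * \<chi> x) * y"
        proof
          fix y assume "y \<in> J"
          have "\<chi> (r * x) * y = \<phi> ((r * x) * y)" using chi[OF \<open>r * x \<in> I\<close>] \<open>y \<in> J\<close> by simp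
          also have "\<dots> = r * \<phi> (x * y)"
            using lin xy xx \<open>y \<in> J\<close> unfolding ideal_linear_def by (simp add: mult.assoc)
          also have "\<dots> = (r * \<chi> x) * y" using chi xx \<open>y \<in> J\<close> by (simp add: mult.assoc)
          finally show "\<chi> (r * x) * y = (r * \<chi> x) * y" .
        qed
        then show "\<chi> (r * x) = r * \<chi> x" by (rule GV_parts(3)[OF GJ])
      qed
      then obtain c where c: "\<forall>x\<in>I. \<chi> x = c * x" using GV_parts(4)[OF GI] by blast
      have "\<forall>k<n * m. \<phi> (Pg k) = c * Pg k"
      proof (intro allI impI)
        fix k assume "k < n * m"
        then have a: "k div m < n" by (simp add: less_mult_imp_div_less)
        have b: "k mod m < m" using m0 by simp
        have "g (k div m) \<in> I" "h (k mod m) \<in> J" using a b I J gen_in_span by blast+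
        then show "\<phi> (Pg k) = c * Pg k" unfolding Pg_def using chi c by (simp add: mult.assoc)
      qed
      moreover have "\<forall>k<n * m. Pg k \<in> P" unfolding P_def using gen_in_span by blast
      ultimately have "\<forall>z\<in>P. \<phi> z = c * z" using L2[OF lin iP, of "n * m" Pg c] unfolding P_def by simp
      then show ?thesis by blast
    qed
    show ?thesis
    proof (intro exI[of _ P] conjI allI impI)
      show "GV_ideal P" by (rule GV_intro[OF P_def]) (fact inj, fact surj)
    next
      fix W :: "'r set" assume W: "is_ideal W" "\<forall>x\<in>I. \<forall>y\<in>J. x * y \<in> W"
      have "\<forall>k<n * m. Pg k \<in> W"
      proof (intro allI impI)
        fix k assume "k < n * m"
        then have a: "k div m < n" by (simp add: less_mult_imp_div_less)
        have b: "k mod m < m" using m0 by simp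
        have "g (k div m) \<in> I" "h (k mod m) \<in> J" using a b I J gen_in_span by blast+
        then show "Pg k \<in> W" unfolding Pg_def using W(2) by simp
      qed
      then show "P \<subseteq> W" unfolding P_def using span_sub[OF W(1)] by simp
    qed
  qed
qed

lemma combine:
  fixes W :: "'r::comm_ring_1 set"
  assumes W: "is_ideal W" and G1: "GV_ideal J1"
    and h: "\<forall>r\<in>J1. \<exists>J2. GV_ideal J2 \<and> (\<forall>t\<in>J2. t * r \<in> W)"
  shows "\<exists>J::'r set. GV_ideal J \<and> J \<subseteq> W"
proof -
  obtain p u where J1: "J1 = span_of p u" using GV_parts(2)[OF G1] by blast
  have "\<exists>J2. GV_ideal J2 \<and> (\<forall>t\<in>J2. t * u a \<in> W)" if "a < p" for a
  proof -
    have "u a \<in> J1" unfolding J1 using that by (rule gen_in_span)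
    then show ?thesis using h by simp
  qed
  then obtain Jc where Jc: "\<And>a. a < p \<Longrightarrow> GV_ideal (Jc a)" "\<And>a. a < p \<Longrightarrow> (\<forall>t\<in>Jc a. t * u a \<in> W)"
    by metis
  have "q \<le> p \<Longrightarrow> \<exists>J'::'r set. GV_ideal J' \<and> (\<forall>a<q. \<forall>t\<in>J'. t * u a \<in> W)" for q
  proof (induct q)
    case 0 show ?case using GV_UNIV by blast
  next
    case (Suc q)
    then obtain J' :: "'r set" where J': "GV_ideal J'" "\<forall>a<q. \<forall>t\<in>J'. t * u a \<in> W" by auto
    have q: "q < p" using Suc by simp
    obtain P :: "'r set" where P: "GV_ideal P"
      "\<And>W. is_ideal W \<Longrightarrow> (\<forall>x\<in>J'. \<forall>y\<in>Jc q. x * y \<in> W) \<Longrightarrow> P \<subseteq> W"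
      using GV_prod[OF J'(1) Jc(1)[OF q]] by blast
    have i1: "is_ideal J'" by (rule GV_parts(1)[OF J'(1)])
    have i2: "is_ideal (Jc q)" by (rule GV_parts(1)[OF Jc(1)[OF q]])
    have "\<forall>x\<in>J'. \<forall>y\<in>Jc q. x * y \<in> J'" using ideal_mult2[OF i1] by simp
    then have s1: "P \<subseteq> J'" by (rule P(2)[OF i1])
    have "\<forall>x\<in>J'. \<forall>y\<in>Jc q. x * y \<in> Jc q" using ideal_mult[OF i2] by simp
    then have s2: "P \<subseteq> Jc q" by (rule P(2)[OF i2])
    have "\<forall>a<Suc q. \<forall>t\<in>P. t * u a \<in> W"
    proof (intro allI impI ballI)
      fix a t assume a: "a < Suc q" and t: "t \<in> P"
      show "t * u a \<in> W"
      proof (cases "a = q")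
        case True then show ?thesis using Jc(2)[OF q] s2 t by auto
      next
        case False then have "a < q" using a by simp
        then show ?thesis using J'(2) s1 t by auto
      qed
    qed
    then show ?case using P(1) by blast
  qed
  then obtain J' :: "'r set" where J': "GV_ideal J'" "\<forall>a<p. \<forall>t\<in>J'. t * u a \<in> W" by blast
  obtain P :: "'r set" where P: "GV_ideal P" "\<And>W. is_ideal W \<Longrightarrow> (\<forall>x\<in>J1. \<forall>y\<in>J'. x * y \<in> W) \<Longrightarrow> P \<subseteq> W"
    using GV_prod[OF G1 J'(1)] by blast
  have "\<forall>x\<in>J1. \<forall>y\<in>J'. x * y \<in> W"
  proof (intro ballI)
    fix x y assume "x \<in> J1" "y \<in> J'"
    then show "x * y \<in> W" using span_mult_in[OF W, of p u y x] J'(2) J1 by (simp add: mult.commute)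
  qed
  then have "P \<subseteq> W" by (rule P(2)[OF W])
  then show ?thesis using P(1) by blast
qed

definition dot :: "nat \<Rightarrow> (nat \<Rightarrow> 'r::comm_ring_1) \<Rightarrow> (nat \<Rightarrow> 'r) \<Rightarrow> 'r" where
  "dot m d v = (\<Sum>j<m. d j * v j)"

lemma dot_comm: "dot m d v = dot m v d"
  unfolding dot_def by (simp add: mult.commute)

lemma dot_swap: "dot m (\<lambda>j. dot M e (\<lambda>k. G k j)) \<alpha> = dot M e (\<lambda>k. dot m (G k) \<alpha>)"
  unfolding dot_def
  by (simp add: sum_distrib_left sum_distrib_right mult.assoc sum.swap[of _ "{..<m}"])



lemma dot_delta2: "k < m \<Longrightarrow> dot m v (\<lambda>j. if j = k then 1 else 0) = v k"
proof -
  assume "k < m"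
  have "dot m v (\<lambda>j. if j = k then 1 else 0) = (\<Sum>j<m. if j = k then v j else 0)"
    unfolding dot_def by (rule sum.cong) auto
  then show ?thesis using \<open>k < m\<close> by simp
qed

lemma dot_delta: "k < m \<Longrightarrow> dot m (\<lambda>j. if j = k then 1 else 0) v = v k"
  using dot_delta2[of k m v] by (simp add: dot_comm)

lemma dot_cong: "(\<And>j. j < m \<Longrightarrow> d j = d' j) \<Longrightarrow> (\<And>j. j < m \<Longrightarrow> v j = v' j) \<Longrightarrow> dot m d v = dot m d' v'"
  unfolding dot_def by (rule sum.cong) auto

lemma dot_add: "dot m (\<lambda>j. d j + d' j) v = dot m d v + dot m d' v"
  unfolding dot_def by (simp add: sum.distrib distrib_right)
lemma dot_diff: "dot m (\<lambda>j. d j - d' j) v = dot m d v - dot m d' v"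
  unfolding dot_def by (simp add: sum_subtractf left_diff_distrib)
lemma dot_scale: "dot m (\<lambda>j. r * d j) v = r * dot m d v"
  unfolding dot_def by (simp add: sum_distrib_left mult.assoc)
lemma dot_add2: "dot m d (\<lambda>j. v j + v' j) = dot m d v + dot m d v'"
  unfolding dot_def by (simp add: sum.distrib distrib_left)
lemma dot_diff2: "dot m d (\<lambda>j. v j - v' j) = dot m d v - dot m d v'"
  unfolding dot_def by (simp add: sum_subtractf right_diff_distrib)
lemma dot_scale2: "dot m d (\<lambda>j. r * v j) = r * dot m d v"
  unfolding dot_def by (simp add: sum_distrib_left mult.left_commute)
lemma dot_zero: "dot m (\<lambda>j. 0) v = 0" "dot m d (\<lambda>j. 0) = 0"
  unfolding dot_def by simp_all

lemma dot_split: "dot (m + M) d v = dot m d v + dot M (\<lambda>k. d (m + k)) (\<lambda>k. v (m + k))"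
  unfolding dot_def by (induct M) (simp_all add: add_ac)

lemma fg_dot: "fg_submod m S \<longleftrightarrow> (\<exists>M G. (\<forall>k<M. G k \<in> fvec m) \<and> S = {(\<lambda>i. dot M d (\<lambda>k. G k i)) | d. True})"
  unfolding fg_submod_def dot_def by simp

lemma fvec_iff: "v \<in> fvec m \<longleftrightarrow> (\<forall>i\<ge>m. v i = 0)"
  unfolding fvec_def by simp

lemma scalar_rels:
  fixes \<alpha> :: "nat \<Rightarrow> 'r::comm_ring_1"
  assumes coh: "coherent_ring TYPE('r)"
  shows "fg_submod m {d \<in> fvec m. dot m d \<alpha> = 0}"
proof -
  define I where "I = span_of m \<alpha>"
  have "is_ideal I" unfolding I_def by (rule is_ideal_span)
  moreover have "fin_gen_ideal I" unfolding fin_gen_ideal_def igb_span I_def by blast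
  ultimately have "fin_pres_ideal I" using coh unfolding coherent_ring_def by blast
  then obtain n0 g M and rel :: "nat \<Rightarrow> nat \<Rightarrow> 'r" where Ig: "I = span_of n0 g"
    and relset0: "{c. (\<forall>i\<ge>n0. c i = 0) \<and> (\<Sum>i<n0. c i * g i) = 0} = {(\<lambda>i. \<Sum>j<M. d j * rel j i) | d. True}"
    unfolding fin_pres_ideal_def igb_span by blast
  have relset: "((\<forall>i\<ge>n0. c i = 0) \<and> dot n0 c g = 0) \<longleftrightarrow> (\<exists>e. c = (\<lambda>i. dot M e (\<lambda>k. rel k i)))" for c
  proof -
    have "c \<in> {c. (\<forall>i\<ge>n0. c i = 0) \<and> (\<Sum>i<n0. c i * g i) = 0} \<longleftrightarrow> c \<in> {(\<lambda>i. \<Sum>j<M. d j * rel j i) | d. True}"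
      by (simp only: relset0)
    then show ?thesis by (simp add: dot_def)
  qed
  have "\<forall>j. \<exists>c. j < m \<longrightarrow> \<alpha> j = dot n0 c g"
  proof
    fix j show "\<exists>c. j < m \<longrightarrow> \<alpha> j = dot n0 c g"
    proof (cases "j < m")
      case True
      then have "\<alpha> j \<in> span_of n0 g" using gen_in_span[of j m \<alpha>] unfolding I_def[symmetric] Ig by simp
      then show ?thesis by (auto elim!: span_ofE simp: dot_def)
    qed simp
  qed
  then obtain A where A: "\<And>j. j < m \<Longrightarrow> \<alpha> j = dot n0 (A j) g" by metis
  have "\<forall>i. \<exists>c. i < n0 \<longrightarrow> g i = dot m c \<alpha>"
  proof
    fix i show "\<exists>c. i < n0 \<longrightarrow> g i = dot m c \<alpha>"
    proof (cases "i < n0")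
      case True
      then have "g i \<in> span_of m \<alpha>" using gen_in_span[of i n0 g] unfolding I_def[symmetric] Ig by simp
      then show ?thesis by (auto elim!: span_ofE simp: dot_def)
    qed simp
  qed
  then obtain B where B: "\<And>i. i < n0 \<Longrightarrow> g i = dot m (B i) \<alpha>" by metis
  define E where "E j = (\<lambda>l. if l < m then (if l = j then 1 else 0) - dot n0 (A j) (\<lambda>i. B i l) else 0)" for j
  define F where "F k = (\<lambda>l. if l < m then dot n0 (rel k) (\<lambda>i. B i l) else 0)" for k
  define G where "G x = (if x < m then E x else F (x - m))" for x
  have relk: "dot n0 (rel k) g = 0" if "k < M" for k
  proof -
    have "(\<lambda>i. dot M (\<lambda>j. if j = k then 1 else 0) (\<lambda>k. rel k i)) = rel k"
      using that by (simp add: dot_delta)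
    then have "\<exists>e. rel k = (\<lambda>i. dot M e (\<lambda>k. rel k i))" by metis
    then show ?thesis using relset[of "rel k"] by simp
  qed
  have Erel: "dot m (E j) \<alpha> = 0" if "j < m" for j
  proof -
    have "dot m (E j) \<alpha> = dot m (\<lambda>l. (if l = j then 1 else 0) - dot n0 (A j) (\<lambda>i. B i l)) \<alpha>"
      unfolding E_def by (rule dot_cong) auto
    also have "\<dots> = \<alpha> j - dot m (\<lambda>l. dot n0 (A j) (\<lambda>i. B i l)) \<alpha>"
      using that by (simp add: dot_diff dot_delta)
    also have "dot m (\<lambda>l. dot n0 (A j) (\<lambda>i. B i l)) \<alpha> = dot n0 (A j) (\<lambda>i. dot m (B i) \<alpha>)"
      by (rule dot_swap)
    also have "\<dots> = dot n0 (A j) g" by (rule dot_cong) (auto simp: B)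
    finally show ?thesis using A[OF that] by simp
  qed
  have Frel: "dot m (F k) \<alpha> = 0" if "k < M" for k
  proof -
    have "dot m (F k) \<alpha> = dot m (\<lambda>l. dot n0 (rel k) (\<lambda>i. B i l)) \<alpha>"
      unfolding F_def by (rule dot_cong) auto
    also have "\<dots> = dot n0 (rel k) (\<lambda>i. dot m (B i) \<alpha>)" by (rule dot_swap)
    also have "\<dots> = dot n0 (rel k) g" by (rule dot_cong) (auto simp: B)
    finally show ?thesis using relk[OF that] by simp
  qed
  have Grel: "dot m (G x) \<alpha> = 0" if "x < m + M" for x
    using Erel Frel that unfolding G_def by auto
  have Gfv: "G x l = 0" if "l \<ge> m" for x l
    using that unfolding G_def E_def F_def by auto
  have "{d \<in> fvec m. dot m d \<alpha> = 0} = {(\<lambda>l. dot (m + M) e (\<lambda>x. G x l)) | e. True}"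
  proof (intro equalityI subsetI)
    fix d assume "d \<in> {d \<in> fvec m. dot m d \<alpha> = 0}"
    then have dfv: "\<And>l. l \<ge> m \<Longrightarrow> d l = 0" and d0: "dot m d \<alpha> = 0" by (auto simp: fvec_iff)
    define c where "c i = (if i < n0 then dot m d (\<lambda>j. A j i) else 0)" for i
    have "dot n0 c g = dot n0 (\<lambda>i. dot m d (\<lambda>j. A j i)) g"
      unfolding c_def by (rule dot_cong) auto
    also have "\<dots> = dot m d (\<lambda>j. dot n0 (A j) g)" by (rule dot_swap)
    also have "\<dots> = dot m d \<alpha>" by (rule dot_cong) (auto simp: A)
    finally have "dot n0 c g = 0" using d0 by simp
    moreover have "\<forall>i\<ge>n0. c i = 0" unfolding c_def by simp
    ultimately obtain e where ce: "c = (\<lambda>i. dot M e (\<lambda>k. rel k i))" using relset[of c] by blast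
    define e' where "e' x = (if x < m then d x else e (x - m))" for x
    have "d = (\<lambda>l. dot (m + M) e' (\<lambda>x. G x l))"
    proof
      fix l show "d l = dot (m + M) e' (\<lambda>x. G x l)"
      proof (cases "l < m")
        case False
        then have "(\<lambda>x. G x l) = (\<lambda>x. 0)" using Gfv by auto
        then show ?thesis using dfv False by (simp add: dot_zero)
      next
        case True
        have "dot (m + M) e' (\<lambda>x. G x l) = dot m d (\<lambda>x. E x l) + dot M e (\<lambda>k. F k l)"
          unfolding dot_split by (intro arg_cong2[where f="(+)"] dot_cong) (auto simp: e'_def G_def)
        also have "dot m d (\<lambda>x. E x l) = dot m d (\<lambda>x. (if x = l then 1 else 0) - dot n0 (A x) (\<lambda>i. B i l))"
          unfolding E_def using True by (intro dot_cong) auto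
        also have "\<dots> = d l - dot m d (\<lambda>x. dot n0 (A x) (\<lambda>i. B i l))"
          using True by (simp add: dot_diff2 dot_delta2)
        also have "dot m d (\<lambda>x. dot n0 (A x) (\<lambda>i. B i l)) = dot n0 (\<lambda>i. dot m d (\<lambda>x. A x i)) (\<lambda>i. B i l)"
          by (rule dot_swap[symmetric])
        also have "\<dots> = dot n0 c (\<lambda>i. B i l)" unfolding c_def by (rule dot_cong) auto
        also have "dot M e (\<lambda>k. F k l) = dot M e (\<lambda>k. dot n0 (rel k) (\<lambda>i. B i l))"
          unfolding F_def using True by (intro dot_cong) auto
        also have "\<dots> = dot n0 (\<lambda>i. dot M e (\<lambda>k. rel k i)) (\<lambda>i. B i l)"
          by (rule dot_swap[symmetric])
        also have "\<dots> = dot n0 c (\<lambda>i. B i l)" unfolding ce ..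
        finally show ?thesis by simp
      qed
    qed
    then show "d \<in> {(\<lambda>l. dot (m + M) e (\<lambda>x. G x l)) | e. True}" by blast
  next
    fix d assume "d \<in> {(\<lambda>l. dot (m + M) e (\<lambda>x. G x l)) | e. True}"
    then obtain e where de: "d = (\<lambda>l. dot (m + M) e (\<lambda>x. G x l))" by blast
    have "d \<in> fvec m"
    proof -
      have "d l = 0" if "l \<ge> m" for l
      proof -
        have "(\<lambda>x. G x l) = (\<lambda>x. 0)" using Gfv that by auto
        then show ?thesis unfolding de by (simp add: dot_zero)
      qed
      then show ?thesis by (simp add: fvec_iff)
    qed
    moreover have "dot m d \<alpha> = 0"
    proof -
      have "dot m d \<alpha> = dot (m + M) e (\<lambda>x. dot m (G x) \<alpha>)" unfolding de by (rule dot_swap)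
      also have "\<dots> = dot (m + M) e (\<lambda>x. 0)" by (rule dot_cong) (auto simp: Grel)
      finally show ?thesis by (simp add: dot_zero)
    qed
    ultimately show "d \<in> {d \<in> fvec m. dot m d \<alpha> = 0}" by blast
  qed
  moreover have "\<forall>x<m + M. G x \<in> fvec m" using Gfv by (simp add: fvec_iff)
  ultimately show ?thesis unfolding fg_dot by blast
qed

lemma fg_obtain:
  assumes "fg_submod m S"
  obtains M G where "\<And>k. k < M \<Longrightarrow> G k \<in> fvec m"
    "\<And>x. x \<in> S \<longleftrightarrow> (\<exists>d. x = (\<lambda>i. dot M d (\<lambda>k. G k i)))"
proof -
  obtain M G where "\<forall>k<M. G k \<in> fvec m" and S: "S = {(\<lambda>i. dot M d (\<lambda>k. G k i)) | d. True}"
    using assms unfolding fg_dot by blast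
  moreover have "\<And>x. x \<in> S \<longleftrightarrow> (\<exists>d. x = (\<lambda>i. dot M d (\<lambda>k. G k i)))" unfolding S by blast
  ultimately show ?thesis using that by blast
qed

lemma fg_intro:
  assumes "\<And>k. k < M \<Longrightarrow> G k \<in> fvec m"
    "\<And>x. x \<in> S \<longleftrightarrow> (\<exists>d. x = (\<lambda>i. dot M d (\<lambda>k. G k i)))"
  shows "fg_submod m S"
proof -
  have "S = {(\<lambda>i. dot M d (\<lambda>k. G k i)) | d. True}" using assms(2) by blast
  then show ?thesis unfolding fg_dot using assms(1) by blast
qed

lemma vec_rels:
  fixes gen :: "nat \<Rightarrow> nat \<Rightarrow> 'r::comm_ring_1"
  assumes coh: "coherent_ring TYPE('r)"
  shows "(\<forall>j<m. gen j \<in> fvec n) \<Longrightarrow> fg_submod m {d \<in> fvec m. \<forall>i. dot m d (\<lambda>j. gen j i) = 0}"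
proof (induct n arbitrary: m gen)
  case 0
  define U :: "nat \<Rightarrow> nat \<Rightarrow> 'r" where "U k l = (if k = l then 1 else 0)" for k l
  show ?case
  proof (rule fg_intro[where M=m and G=U])
    fix k assume "k < m" then show "U k \<in> fvec m" unfolding U_def fvec_iff by auto
  next
    fix x
    have comb: "dot m d (\<lambda>k. U k l) = (if l < m then d l else 0)" for d l
    proof (cases "l < m")
      case True then show ?thesis unfolding U_def by (simp add: dot_delta2)
    next
      case False
      then have "dot m d (\<lambda>k. U k l) = dot m d (\<lambda>k. 0)" unfolding U_def by (intro dot_cong) auto
      then show ?thesis using False by (simp add: dot_zero)
    qed
    have g0: "dot m d (\<lambda>j. gen j i) = 0" for d i
    proof -
      have "dot m d (\<lambda>j. gen j i) = dot m d (\<lambda>j. 0)" using 0 by (intro dot_cong) (auto simp: fvec_iff)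
      then show ?thesis by (simp add: dot_zero)
    qed
    show "x \<in> {d \<in> fvec m. \<forall>i. dot m d (\<lambda>j. gen j i) = 0} \<longleftrightarrow> (\<exists>d. x = (\<lambda>i. dot m d (\<lambda>k. U k i)))"
    proof
      assume "x \<in> {d \<in> fvec m. \<forall>i. dot m d (\<lambda>j. gen j i) = 0}"
      then have "x = (\<lambda>i. dot m x (\<lambda>k. U k i))" unfolding comb by (auto simp: fvec_iff)
      then show "\<exists>d. x = (\<lambda>i. dot m d (\<lambda>k. U k i))" by blast
    next
      assume "\<exists>d. x = (\<lambda>i. dot m d (\<lambda>k. U k i))"
      then show "x \<in> {d \<in> fvec m. \<forall>i. dot m d (\<lambda>j. gen j i) = 0}" unfolding comb by (auto simp: fvec_iff g0)
    qed
  qed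
next
  case (Suc n)
  define \<alpha> where "\<alpha> = (\<lambda>j. gen j n)"
  obtain p s where sfv: "\<And>k. k < p \<Longrightarrow> s k \<in> fvec m"
    and smem: "\<And>x. x \<in> {d \<in> fvec m. dot m d \<alpha> = 0} \<longleftrightarrow> (\<exists>e. x = (\<lambda>j. dot p e (\<lambda>k. s k j)))"
    using fg_obtain[OF scalar_rels[OF coh, of m \<alpha>]] by blast
  have srel: "dot m (s k) \<alpha> = 0" if "k < p" for k
  proof -
    have "s k = (\<lambda>j. dot p (\<lambda>l. if l = k then 1 else 0) (\<lambda>k. s k j))" using that by (simp add: dot_delta)
    then show ?thesis using smem[of "s k"] by blast
  qed
  define gen' where "gen' k = (\<lambda>i. dot m (s k) (\<lambda>j. gen j i))" for k
  have "\<forall>k<p. gen' k \<in> fvec n"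
  proof (intro allI impI)
    fix k assume k: "k < p"
    have "gen' k i = 0" if "i \<ge> n" for i
    proof (cases "i = n")
      case True then show ?thesis unfolding gen'_def using srel[OF k] by (simp add: \<alpha>_def)
    next
      case False
      then have "gen' k i = dot m (s k) (\<lambda>j. 0)" unfolding gen'_def
        using Suc.prems that by (intro dot_cong) (auto simp: fvec_iff)
      then show ?thesis by (simp add: dot_zero)
    qed
    then show "gen' k \<in> fvec n" by (simp add: fvec_iff)
  qed
  note IH = Suc.hyps[OF this]
  obtain q t where tfv: "\<And>k. k < q \<Longrightarrow> t k \<in> fvec p"
    and tmem: "\<And>x. x \<in> {e \<in> fvec p. \<forall>i. dot p e (\<lambda>k. gen' k i) = 0} \<longleftrightarrow> (\<exists>f. x = (\<lambda>l. dot q f (\<lambda>k. t k l)))"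
    using fg_obtain[OF IH] by blast
  have trel: "dot p (t k) (\<lambda>l. gen' l i) = 0" if "k < q" for k i
  proof -
    have "t k = (\<lambda>l. dot q (\<lambda>l. if l = k then 1 else 0) (\<lambda>k. t k l))" using that by (simp add: dot_delta)
    then show ?thesis using tmem[of "t k"] by blast
  qed
  define G where "G k = (\<lambda>j. dot p (t k) (\<lambda>l. s l j))" for k
  have Gz: "G k j = 0" if "j \<ge> m" for k j
  proof -
    have "G k j = dot p (t k) (\<lambda>l. 0)" unfolding G_def using sfv that by (intro dot_cong) (auto simp: fvec_iff)
    then show ?thesis by (simp add: dot_zero)
  qed
  show ?case
  proof (rule fg_intro[where M=q and G=G])
    fix k assume "k < q" then show "G k \<in> fvec m" using Gz by (simp add: fvec_iff)
  next
    fix x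
    show "x \<in> {d \<in> fvec m. \<forall>i. dot m d (\<lambda>j. gen j i) = 0} \<longleftrightarrow> (\<exists>f. x = (\<lambda>j. dot q f (\<lambda>k. G k j)))"
    proof
      assume "x \<in> {d \<in> fvec m. \<forall>i. dot m d (\<lambda>j. gen j i) = 0}"
      then have xfv: "x \<in> fvec m" and x0: "\<And>i. dot m x (\<lambda>j. gen j i) = 0" by auto
      have "dot m x \<alpha> = 0" using x0[of n] unfolding \<alpha>_def .
      then obtain e where xe: "x = (\<lambda>j. dot p e (\<lambda>k. s k j))" using smem[of x] xfv by blast
      define e' where "e' l = (if l < p then e l else 0)" for l
      have xe': "x = (\<lambda>j. dot p e' (\<lambda>k. s k j))" unfolding xe e'_def by (intro ext dot_cong) auto
      have "e' \<in> fvec p" unfolding e'_def by (simp add: fvec_iff)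
      moreover have "dot p e' (\<lambda>k. gen' k i) = 0" for i
      proof -
        have "dot p e' (\<lambda>k. gen' k i) = dot m (\<lambda>j. dot p e' (\<lambda>l. s l j)) (\<lambda>j. gen j i)"
          unfolding gen'_def by (rule dot_swap[symmetric])
        also have "\<dots> = dot m x (\<lambda>j. gen j i)" using xe' by simp
        finally show ?thesis using x0 by simp
      qed
      ultimately obtain f where e'f: "e' = (\<lambda>l. dot q f (\<lambda>k. t k l))" using tmem[of e'] by blast
      have "x = (\<lambda>j. dot q f (\<lambda>k. G k j))"
      proof
        fix j
        have "x j = dot p (\<lambda>l. dot q f (\<lambda>k. t k l)) (\<lambda>l. s l j)" using xe' e'f by simp
        also have "\<dots> = dot q f (\<lambda>k. G k j)" unfolding G_def by (rule dot_swap)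
        finally show "x j = dot q f (\<lambda>k. G k j)" .
      qed
      then show "\<exists>f. x = (\<lambda>j. dot q f (\<lambda>k. G k j))" by blast
    next
      assume "\<exists>f. x = (\<lambda>j. dot q f (\<lambda>k. G k j))"
      then obtain f where xf: "x = (\<lambda>j. dot q f (\<lambda>k. G k j))" by blast
      have "x \<in> fvec m"
      proof -
        have "x j = 0" if "j \<ge> m" for j
        proof -
          have "x j = dot q f (\<lambda>k. 0)" unfolding xf using Gz that by (intro dot_cong) auto
          then show ?thesis by (simp add: dot_zero)
        qed
        then show ?thesis by (simp add: fvec_iff)
      qed
      moreover have "dot m x (\<lambda>j. gen j i) = 0" for i
      proof -
        have "dot m x (\<lambda>j. gen j i) = dot q f (\<lambda>k. dot m (G k) (\<lambda>j. gen j i))"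
          unfolding xf by (rule dot_swap)
        also have "\<dots> = dot q f (\<lambda>k. 0)"
        proof (rule dot_cong)
          fix k assume "k < q"
          have "dot m (G k) (\<lambda>j. gen j i) = dot p (t k) (\<lambda>l. dot m (s l) (\<lambda>j. gen j i))"
            unfolding G_def by (rule dot_swap)
          also have "\<dots> = 0" using trel[OF \<open>k < q\<close>, of i] unfolding gen'_def .
          finally show "dot m (G k) (\<lambda>j. gen j i) = 0" .
        qed simp
        finally show ?thesis by (simp add: dot_zero)
      qed
      ultimately show "x \<in> {d \<in> fvec m. \<forall>i. dot m d (\<lambda>j. gen j i) = 0}" by blast
    qed
  qed
qed

lemma W_ideal:
  assumes "module s"
  shows "is_ideal {u. \<exists>c. \<forall>x\<in>K. s u (h x) = (\<Sum>i<(n::nat). s (x i) (c i))}"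
proof -
  interpret M: module s by fact
  show ?thesis unfolding is_ideal_def
  proof (intro conjI ballI allI)
    show "0 \<in> {u. \<exists>c. \<forall>x\<in>K. s u (h x) = (\<Sum>i<n. s (x i) (c i))}"
      by (rule CollectI, rule exI[of _ "\<lambda>_. 0"]) simp
  next
    fix u v assume "u \<in> {u. \<exists>c. \<forall>x\<in>K. s u (h x) = (\<Sum>i<n. s (x i) (c i))}"
      "v \<in> {u. \<exists>c. \<forall>x\<in>K. s u (h x) = (\<Sum>i<n. s (x i) (c i))}"
    then obtain c c' where c: "\<forall>x\<in>K. s u (h x) = (\<Sum>i<n. s (x i) (c i))"
      and c': "\<forall>x\<in>K. s v (h x) = (\<Sum>i<n. s (x i) (c' i))" by blast
    have "\<forall>x\<in>K. s (u + v) (h x) = (\<Sum>i<n. s (x i) (c i + c' i))"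
      using c c' by (simp add: M.scale_left_distrib M.scale_right_distrib sum.distrib)
    then show "u + v \<in> {u. \<exists>c. \<forall>x\<in>K. s u (h x) = (\<Sum>i<n. s (x i) (c i))}"
      by (intro CollectI exI[of _ "\<lambda>i. c i + c' i"])
  next
    fix r u assume "u \<in> {u. \<exists>c. \<forall>x\<in>K. s u (h x) = (\<Sum>i<n. s (x i) (c i))}"
    then obtain c where c: "\<forall>x\<in>K. s u (h x) = (\<Sum>i<n. s (x i) (c i))" by blast
    have "\<forall>x\<in>K. s (r * u) (h x) = (\<Sum>i<n. s (x i) (s r (c i)))"
    proof
      fix x assume "x \<in> K"
      have "s (r * u) (h x) = s r (s u (h x))" by simp
      also have "\<dots> = (\<Sum>i<n. s r (s (x i) (c i)))" using c \<open>x \<in> K\<close> by (simp add: M.scale_sum_right)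
      also have "\<dots> = (\<Sum>i<n. s (x i) (s r (c i)))" by (simp add: mult.commute)
      finally show "s (r * u) (h x) = (\<Sum>i<n. s (x i) (s r (c i)))" .
    qed
    then show "r * u \<in> {u. \<exists>c. \<forall>x\<in>K. s u (h x) = (\<Sum>i<n. s (x i) (c i))}"
      by (intro CollectI exI[of _ "\<lambda>i. s r (c i)"])
  qed
qed

lemma finish:
  fixes s :: "'r::comm_ring_1 \<Rightarrow> 'a::ab_group_add \<Rightarrow> 'a"
  assumes "module s" "GV_ideal J1"
    "\<forall>r\<in>J1. \<exists>J2. GV_ideal J2 \<and> (\<forall>t\<in>J2. \<exists>c. \<forall>x\<in>K. s (t * r) (h x) = (\<Sum>i<(n::nat). s (x i) (c i)))"
  shows "\<exists>J. GV_ideal J \<and> (\<forall>r\<in>J. \<exists>c. \<forall>x\<in>K. s r (h x) = (\<Sum>i<n. s (x i) (c i)))"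
proof -
  have "\<exists>J::'r set. GV_ideal J \<and> J \<subseteq> {u. \<exists>c. \<forall>x\<in>K. s u (h x) = (\<Sum>i<n. s (x i) (c i))}"
    by (rule combine[OF W_ideal[OF assms(1)] assms(2)]) (use assms(3) in blast)
  then show ?thesis by blast
qed

lemma dir_CB:
  fixes sA :: "'r::comm_ring_1 \<Rightarrow> 'a::ab_group_add \<Rightarrow> 'a"
    and sB :: "'r \<Rightarrow> 'b::ab_group_add \<Rightarrow> 'b"
    and sC :: "'r \<Rightarrow> 'c::ab_group_add \<Rightarrow> 'c"
    and f :: "'a \<Rightarrow> 'b" and g :: "'b \<Rightarrow> 'c"
  assumes mA: "module sA" and mB: "module sB" and mC: "module sC"
    and hf: "module_hom sA sB f" and hg: "module_hom sB sC g"
    and injf: "inj f" and surjg: "surj g" and ex: "range f = {b. g b = 0}"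
    and pA: "abs_w_pure sA" and pC: "abs_w_pure sC"
  shows "abs_w_pure sB"
  unfolding abs_w_pure_def
proof (intro allI impI)
  interpret A: module sA by fact
  interpret B: module sB by fact
  interpret C: module sC by fact
  interpret f: module_hom sA sB f by fact
  interpret g: module_hom sB sC g by fact
  fix n and K :: "(nat \<Rightarrow> 'r) set" and \<phi> :: "(nat \<Rightarrow> 'r) \<Rightarrow> 'b"
  assume fg: "fg_submod n K" and lin: "lin_on K sB \<phi>"
  have linC: "lin_on K sC (\<lambda>x. g (\<phi> x))"
    using lin unfolding lin_on_def by (simp add: g.add g.scale)
  obtain J1 where J1: "GV_ideal J1"
    and h1: "\<forall>r\<in>J1. \<exists>c. \<forall>x\<in>K. sC r (g (\<phi> x)) = (\<Sum>i<n. sC (x i) (c i))"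
    using pC fg linC unfolding abs_w_pure_def by blast
  have "\<forall>r\<in>J1. \<exists>J2. GV_ideal J2 \<and> (\<forall>t\<in>J2. \<exists>c. \<forall>x\<in>K. sB (t * r) (\<phi> x) = (\<Sum>i<n. sB (x i) (c i)))"
  proof
    fix r assume "r \<in> J1"
    then obtain c where c: "\<forall>x\<in>K. sC r (g (\<phi> x)) = (\<Sum>i<n. sC (x i) (c i))" using h1 by blast
    define b where "b i = inv g (c i)" for i
    have gb: "g (b i) = c i" for i unfolding b_def using surjg by (simp add: surj_f_inv_f)
    define v where "v x = sB r (\<phi> x) - (\<Sum>i<n. sB (x i) (b i))" for x
    have gv: "g (v x) = 0" if "x \<in> K" for x
      unfolding v_def using c that by (simp add: g.diff g.sum g.scale gb)
    have inr: "v x \<in> range f" if "x \<in> K" for x using gv[OF that] ex by blast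
    define \<psi> where "\<psi> x = inv f (v x)" for x
    have fpsi: "f (\<psi> x) = v x" if "x \<in> K" for x
      unfolding \<psi>_def using inr[OF that] by (simp add: f_inv_into_f)
    have vadd: "v (\<lambda>i. x i + y i) = v x + v y" if "x \<in> K" "y \<in> K" for x y
      using lin that unfolding v_def lin_on_def
      by (simp add: B.scale_right_distrib B.scale_left_distrib sum.distrib algebra_simps)
    have vscale: "v (\<lambda>i. a * x i) = sB a (v x)" if "x \<in> K" for x a
    proof -
      have "(\<Sum>i<n. sB (a * x i) (b i)) = sB a (\<Sum>i<n. sB (x i) (b i))"
        by (simp add: B.scale_sum_right)
      moreover have "\<phi> (\<lambda>i. a * x i) = sB a (\<phi> x)" using lin that unfolding lin_on_def by simp
      ultimately show ?thesis unfolding v_def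
        by (simp add: B.scale_right_diff_distrib mult.commute)
    qed
    have linpsi: "lin_on K sA \<psi>"
      unfolding lin_on_def
    proof (intro conjI ballI allI)
      fix x y assume xy: "x \<in> K" "y \<in> K"
      have e: "v (\<lambda>i. x i + y i) = f (\<psi> x + \<psi> y)" using vadd[OF xy] fpsi xy by (simp add: f.add)
      then have "f (\<psi> (\<lambda>i. x i + y i)) = f (\<psi> x + \<psi> y)"
        unfolding \<psi>_def by (metis f_inv_into_f rangeI)
      then show "\<psi> (\<lambda>i. x i + y i) = \<psi> x + \<psi> y" using injf by (simp add: inj_eq)
    next
      fix a x assume x: "x \<in> K"
      have e: "v (\<lambda>i. a * x i) = f (sA a (\<psi> x))" using vscale[OF x] fpsi[OF x] by (simp add: f.scale)
      then have "f (\<psi> (\<lambda>i. a * x i)) = f (sA a (\<psi> x))"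
        unfolding \<psi>_def by (metis f_inv_into_f rangeI)
      then show "\<psi> (\<lambda>i. a * x i) = sA a (\<psi> x)" using injf by (simp add: inj_eq)
    qed
    obtain J2 where J2: "GV_ideal J2"
      and h2: "\<forall>t\<in>J2. \<exists>a. \<forall>x\<in>K. sA t (\<psi> x) = (\<Sum>i<n. sA (x i) (a i))"
      using pA fg linpsi unfolding abs_w_pure_def by blast
    have "\<forall>t\<in>J2. \<exists>c. \<forall>x\<in>K. sB (t * r) (\<phi> x) = (\<Sum>i<n. sB (x i) (c i))"
    proof
      fix t assume "t \<in> J2"
      then obtain a where a: "\<forall>x\<in>K. sA t (\<psi> x) = (\<Sum>i<n. sA (x i) (a i))" using h2 by blast
      have "\<forall>x\<in>K. sB (t * r) (\<phi> x) = (\<Sum>i<n. sB (x i) (sB t (b i) + f (a i)))"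
      proof
        fix x assume x: "x \<in> K"
        have "sB (t * r) (\<phi> x) = sB t (v x + (\<Sum>i<n. sB (x i) (b i)))"
          unfolding v_def by simp
        also have "\<dots> = sB t (f (\<psi> x)) + (\<Sum>i<n. sB t (sB (x i) (b i)))"
          using fpsi[OF x] by (simp add: B.scale_right_distrib B.scale_sum_right)
        also have "sB t (f (\<psi> x)) = f (\<Sum>i<n. sA (x i) (a i))" using a x by (simp add: f.scale[symmetric])
        also have "\<dots> = (\<Sum>i<n. sB (x i) (f (a i)))" by (simp add: f.sum f.scale)
        finally show "sB (t * r) (\<phi> x) = (\<Sum>i<n. sB (x i) (sB t (b i) + f (a i)))"
          by (simp add: B.scale_right_distrib sum.distrib mult.commute add.commute)
      qed
      then show "\<exists>c. \<forall>x\<in>K. sB (t * r) (\<phi> x) = (\<Sum>i<n. sB (x i) (c i))"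
        by (rule exI[of _ "\<lambda>i. sB t (b i) + f (a i)"])
    qed
    then show "\<exists>J2. GV_ideal J2 \<and> (\<forall>t\<in>J2. \<exists>c. \<forall>x\<in>K. sB (t * r) (\<phi> x) = (\<Sum>i<n. sB (x i) (c i)))"
      using J2 by blast
  qed
  then show "\<exists>J. GV_ideal J \<and> (\<forall>r\<in>J. \<exists>a. \<forall>x\<in>K. sB r (\<phi> x) = (\<Sum>i<n. sB (x i) (a i)))"
    using finish[OF mB J1] by blast
qed

lemma dot_trunc: "q \<le> m \<Longrightarrow> dot m (\<lambda>j. if j < q then d j else 0) v = dot q d v"
proof (induct m)
  case 0 then show ?case by (simp add: dot_def)
next
  case (Suc m)
  show ?case
  proof (cases "q \<le> m")
    case True
    then show ?thesis using Suc by (simp add: dot_def)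
  next
    case False
    then have "q = Suc m" using Suc by simp
    then show ?thesis by (auto intro: dot_cong)
  qed
qed

lemma dir_BC:
  fixes sA :: "'r::comm_ring_1 \<Rightarrow> 'a::ab_group_add \<Rightarrow> 'a"
    and sB :: "'r \<Rightarrow> 'b::ab_group_add \<Rightarrow> 'b"
    and sC :: "'r \<Rightarrow> 'c::ab_group_add \<Rightarrow> 'c"
    and f :: "'a \<Rightarrow> 'b" and g :: "'b \<Rightarrow> 'c"
  assumes coh: "coherent_ring TYPE('r)"
    and mA: "module sA" and mB: "module sB" and mC: "module sC"
    and hf: "module_hom sA sB f" and hg: "module_hom sB sC g"
    and injf: "inj f" and surjg: "surj g" and ex: "range f = {b. g b = 0}"
    and pA: "abs_w_pure sA" and pB: "abs_w_pure sB"
  shows "abs_w_pure sC"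
  unfolding abs_w_pure_def
proof (intro allI impI)
  interpret A: module sA by fact
  interpret B: module sB by fact
  interpret C: module sC by fact
  interpret f: module_hom sA sB f by fact
  interpret g: module_hom sB sC g by fact
  have gf: "g (f a) = 0" for a using ex by blast
  fix n and K :: "(nat \<Rightarrow> 'r) set" and h :: "(nat \<Rightarrow> 'r) \<Rightarrow> 'c"
  assume fg: "fg_submod n K" and lin: "lin_on K sC h"
  obtain m gen where genfv: "\<And>k. k < m \<Longrightarrow> gen k \<in> fvec n"
    and Kmem: "\<And>x. x \<in> K \<longleftrightarrow> (\<exists>d. x = (\<lambda>i. dot m d (\<lambda>k. gen k i)))"
    using fg_obtain[OF fg] by blast
  define comb where "comb d = (\<lambda>i. dot m d (\<lambda>k. gen k i))" for d
  have combK: "comb d \<in> K" for d unfolding comb_def Kmem by blast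
  have genK: "gen j \<in> K" if "j < m" for j
  proof -
    have "gen j = comb (\<lambda>k. if k = j then 1 else 0)" unfolding comb_def using that
      by (simp add: dot_delta)
    then show ?thesis using combK by simp
  qed
  have hadd: "h (\<lambda>i. x i + y i) = h x + h y" if "x \<in> K" "y \<in> K" for x y
    using lin that unfolding lin_on_def by blast
  have hscale: "h (\<lambda>i. a * x i) = sC a (h x)" if "x \<in> K" for x a
    using lin that unfolding lin_on_def by blast
  have h0: "h (\<lambda>i. 0) = 0"
    using hscale[OF combK[of "\<lambda>_. 0"], of 0] by simp
  have hpart: "q \<le> m \<Longrightarrow> h (\<lambda>i. dot q d (\<lambda>k. gen k i)) = (\<Sum>j<q. sC (d j) (h (gen j)))" for q d
  proof (induct q)
    case 0 then show ?case using h0 by (simp add: dot_def)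
  next
    case (Suc q)
    have inK: "(\<lambda>i. dot q d (\<lambda>k. gen k i)) \<in> K"
    proof -
      have "(\<lambda>i. dot q d (\<lambda>k. gen k i)) = comb (\<lambda>j. if j < q then d j else 0)"
      proof
        fix i
        have "dot m (\<lambda>j. if j < q then d j else 0) (\<lambda>k. gen k i) = dot q d (\<lambda>k. gen k i)"
          using Suc by (intro dot_trunc) simp
        then show "dot q d (\<lambda>k. gen k i) = comb (\<lambda>j. if j < q then d j else 0) i"
          unfolding comb_def by simp
      qed
      then show ?thesis using combK by simp
    qed
    have q: "q < m" using Suc by simp
    have inK2: "(\<lambda>i. d q * gen q i) \<in> K"
    proof -
      have "(\<lambda>i. d q * gen q i) = comb (\<lambda>k. d q * (if k = q then 1 else 0))"
        unfolding comb_def using q by (simp add: dot_scale dot_delta)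
      then show ?thesis using combK by simp
    qed
    have "(\<lambda>i. dot (Suc q) d (\<lambda>k. gen k i)) = (\<lambda>i. dot q d (\<lambda>k. gen k i) + d q * gen q i)"
      by (simp add: dot_def)
    then have "h (\<lambda>i. dot (Suc q) d (\<lambda>k. gen k i)) = h (\<lambda>i. dot q d (\<lambda>k. gen k i)) + h (\<lambda>i. d q * gen q i)"
      using hadd[OF inK inK2] by simp
    also have "\<dots> = (\<Sum>j<q. sC (d j) (h (gen j))) + sC (d q) (h (gen q))"
      using Suc hscale[OF genK[OF q]] by simp
    finally show ?case by simp
  qed
  have hcomb: "h (comb d) = (\<Sum>j<m. sC (d j) (h (gen j)))" for d
    unfolding comb_def using hpart by simp
  define b where "b j = inv g (h (gen j))" for j
  have gb: "g (b j) = h (gen j)" for j unfolding b_def using surjg by (simp add: surj_f_inv_f)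
  define \<Lambda>1 where "\<Lambda>1 d = (\<Sum>j<m. sB (d j) (b j))" for d
  have g\<Lambda>1: "g (\<Lambda>1 d) = h (comb d)" for d
    unfolding \<Lambda>1_def hcomb by (simp add: g.sum g.scale gb)
  define L where "L = {d \<in> fvec m. \<forall>i. dot m d (\<lambda>j. gen j i) = 0}"
  have fgL: "fg_submod m L" unfolding L_def using vec_rels[OF coh] genfv by blast
  have combL: "comb d = (\<lambda>i. 0)" if "d \<in> L" for d
    using that unfolding L_def comb_def by auto
  have inrL: "\<Lambda>1 d \<in> range f" if "d \<in> L" for d
    using g\<Lambda>1[of d] combL[OF that] h0 ex by auto
  define \<phi> where "\<phi> d = inv f (\<Lambda>1 d)" for d
  have f\<phi>: "f (\<phi> d) = \<Lambda>1 d" if "d \<in> L" for d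
    unfolding \<phi>_def using inrL[OF that] by (simp add: f_inv_into_f)
  have \<Lambda>1add: "\<Lambda>1 (\<lambda>i. d i + d' i) = \<Lambda>1 d + \<Lambda>1 d'" for d d'
    unfolding \<Lambda>1_def by (simp add: B.scale_left_distrib sum.distrib)
  have \<Lambda>1scale: "\<Lambda>1 (\<lambda>i. a * d i) = sB a (\<Lambda>1 d)" for d a
    unfolding \<Lambda>1_def by (simp add: B.scale_sum_right)
  have linphi: "lin_on L sA \<phi>"
    unfolding lin_on_def
  proof (intro conjI ballI allI)
    fix x y assume xy: "x \<in> L" "y \<in> L"
    have "\<Lambda>1 (\<lambda>i. x i + y i) = f (\<phi> x + \<phi> y)" using \<Lambda>1add f\<phi> xy by (simp add: f.add)
    then have "f (\<phi> (\<lambda>i. x i + y i)) = f (\<phi> x + \<phi> y)"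
      unfolding \<phi>_def by (metis f_inv_into_f rangeI)
    then show "\<phi> (\<lambda>i. x i + y i) = \<phi> x + \<phi> y" using injf by (simp add: inj_eq)
  next
    fix a x assume x: "x \<in> L"
    have "\<Lambda>1 (\<lambda>i. a * x i) = f (sA a (\<phi> x))" using \<Lambda>1scale f\<phi>[OF x] by (simp add: f.scale)
    then have "f (\<phi> (\<lambda>i. a * x i)) = f (sA a (\<phi> x))"
      unfolding \<phi>_def by (metis f_inv_into_f rangeI)
    then show "\<phi> (\<lambda>i. a * x i) = sA a (\<phi> x)" using injf by (simp add: inj_eq)
  qed
  obtain J1 where J1: "GV_ideal J1"
    and h1: "\<forall>r\<in>J1. \<exists>a. \<forall>d\<in>L. sA r (\<phi> d) = (\<Sum>i<m. sA (d i) (a i))"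
    using pA fgL linphi unfolding abs_w_pure_def by blast
  have "\<forall>r\<in>J1. \<exists>J2. GV_ideal J2 \<and> (\<forall>t\<in>J2. \<exists>c. \<forall>x\<in>K. sC (t * r) (h x) = (\<Sum>i<n. sC (x i) (c i)))"
  proof
    fix r assume "r \<in> J1"
    then obtain a where a: "\<forall>d\<in>L. sA r (\<phi> d) = (\<Sum>i<m. sA (d i) (a i))" using h1 by blast
    define \<Lambda> where "\<Lambda> d = sB r (\<Lambda>1 d) - f (\<Sum>j<m. sA (d j) (a j))" for d
    have \<Lambda>L: "\<Lambda> d = 0" if "d \<in> L" for d
    proof -
      have "sB r (\<Lambda>1 d) = f (sA r (\<phi> d))" using f\<phi>[OF that] by (simp add: f.scale)
      then show ?thesis unfolding \<Lambda>_def using a that by simp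
    qed
    have \<Lambda>add: "\<Lambda> (\<lambda>i. d i + d' i) = \<Lambda> d + \<Lambda> d'" for d d'
      unfolding \<Lambda>_def \<Lambda>1add by (simp add: A.scale_left_distrib sum.distrib f.add B.scale_right_distrib algebra_simps)
    have \<Lambda>scale: "\<Lambda> (\<lambda>i. c * d i) = sB c (\<Lambda> d)" for d c
    proof -
      have "(\<Sum>j<m. sA (c * d j) (a j)) = sA c (\<Sum>j<m. sA (d j) (a j))"
        by (simp add: A.scale_sum_right)
      then show ?thesis unfolding \<Lambda>_def \<Lambda>1scale
        by (simp add: f.scale B.scale_right_diff_distrib mult.commute)
    qed
    have \<Lambda>diff: "\<Lambda> (\<lambda>i. d i - d' i) = \<Lambda> d - \<Lambda> d'" for d d'
    proof -
      have "\<Lambda> (\<lambda>i. d i - d' i) + \<Lambda> d' = \<Lambda> d" using \<Lambda>add[of "\<lambda>i. d i - d' i" d'] by simp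
      then show ?thesis by (simp add: algebra_simps)
    qed
    have \<Lambda>cong: "\<Lambda> d = \<Lambda> d'" if "\<And>j. j < m \<Longrightarrow> d j = d' j" for d d'
      unfolding \<Lambda>_def \<Lambda>1_def using that by simp
    have \<Lambda>wd: "\<Lambda> d = \<Lambda> d'" if "comb d = comb d'" for d d'
    proof -
      define e where "e j = (if j < m then d j - d' j else 0)" for j
      have "e \<in> L"
      proof -
        have "dot m e (\<lambda>j. gen j i) = 0" for i
        proof -
          have "dot m e (\<lambda>j. gen j i) = dot m (\<lambda>j. d j - d' j) (\<lambda>j. gen j i)"
            unfolding e_def by (rule dot_cong) auto
          also have "\<dots> = comb d i - comb d' i" unfolding comb_def by (simp add: dot_diff)
          finally show ?thesis using that by simp
        qed
        then show ?thesis unfolding L_def e_def by (simp add: fvec_iff)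
      qed
      then have "\<Lambda> e = 0" by (rule \<Lambda>L)
      moreover have "\<Lambda> e = \<Lambda> (\<lambda>j. d j - d' j)" by (rule \<Lambda>cong) (simp add: e_def)
      ultimately show ?thesis using \<Lambda>diff by simp
    qed
    define \<psi> where "\<psi> x = \<Lambda> (SOME d. x = comb d)" for x
    have \<psi>eq: "\<psi> x = \<Lambda> d" if "x = comb d" for x d
    proof -
      have "x = comb (SOME d. x = comb d)" using someI[of "\<lambda>d. x = comb d" d] that by simp
      then have "comb (SOME d. x = comb d) = comb d" using that by simp
      then show ?thesis unfolding \<psi>_def by (rule \<Lambda>wd)
    qed
    have Kcomb: "\<exists>d. x = comb d" if "x \<in> K" for x using that Kmem unfolding comb_def by blast
    have linpsi: "lin_on K sB \<psi>"
      unfolding lin_on_def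
    proof (intro conjI ballI allI)
      fix x y assume "x \<in> K" "y \<in> K"
      then obtain dx dy where dx: "x = comb dx" and dy: "y = comb dy" using Kcomb by blast
      have "(\<lambda>i. x i + y i) = comb (\<lambda>j. dx j + dy j)" unfolding dx dy comb_def by (simp add: dot_add)
      then have "\<psi> (\<lambda>i. x i + y i) = \<Lambda> (\<lambda>j. dx j + dy j)" by (rule \<psi>eq)
      then show "\<psi> (\<lambda>i. x i + y i) = \<psi> x + \<psi> y" using \<psi>eq[OF dx] \<psi>eq[OF dy] \<Lambda>add by simp
    next
      fix c x assume "x \<in> K"
      then obtain dx where dx: "x = comb dx" using Kcomb by blast
      have "(\<lambda>i. c * x i) = comb (\<lambda>j. c * dx j)" unfolding dx comb_def by (simp add: dot_scale)
      then have "\<psi> (\<lambda>i. c * x i) = \<Lambda> (\<lambda>j. c * dx j)" by (rule \<psi>eq)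
      then show "\<psi> (\<lambda>i. c * x i) = sB c (\<psi> x)" using \<psi>eq[OF dx] \<Lambda>scale by simp
    qed
    have g\<psi>: "g (\<psi> x) = sC r (h x)" if xK: "x \<in> K" for x
    proof -
      obtain dx where dx: "x = comb dx" using Kcomb[OF xK] by blast
      have "g (\<psi> x) = g (\<Lambda> dx)" using \<psi>eq[OF dx] by simp
      also have "\<dots> = sC r (h x)" unfolding \<Lambda>_def using dx g\<Lambda>1 by (simp add: g.diff g.scale gf)
      finally show ?thesis .
    qed
    obtain J2 where J2: "GV_ideal J2"
      and h2: "\<forall>t\<in>J2. \<exists>b'. \<forall>x\<in>K. sB t (\<psi> x) = (\<Sum>i<n. sB (x i) (b' i))"
      using pB fg linpsi unfolding abs_w_pure_def by blast
    have "\<forall>t\<in>J2. \<exists>c. \<forall>x\<in>K. sC (t * r) (h x) = (\<Sum>i<n. sC (x i) (c i))"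
    proof
      fix t assume "t \<in> J2"
      then obtain b' where b': "\<forall>x\<in>K. sB t (\<psi> x) = (\<Sum>i<n. sB (x i) (b' i))" using h2 by blast
      have "\<forall>x\<in>K. sC (t * r) (h x) = (\<Sum>i<n. sC (x i) (g (b' i)))"
      proof
        fix x assume x: "x \<in> K"
        have "sC (t * r) (h x) = sC t (g (\<psi> x))" using g\<psi>[OF x] by simp
        also have "\<dots> = g (sB t (\<psi> x))" by (simp add: g.scale)
        also have "\<dots> = (\<Sum>i<n. sC (x i) (g (b' i)))" using b' x by (simp add: g.sum g.scale)
        finally show "sC (t * r) (h x) = (\<Sum>i<n. sC (x i) (g (b' i)))" .
      qed
      then show "\<exists>c. \<forall>x\<in>K. sC (t * r) (h x) = (\<Sum>i<n. sC (x i) (c i))"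
        by (rule exI[of _ "\<lambda>i. g (b' i)"])
    qed
    then show "\<exists>J2. GV_ideal J2 \<and> (\<forall>t\<in>J2. \<exists>c. \<forall>x\<in>K. sC (t * r) (h x) = (\<Sum>i<n. sC (x i) (c i)))"
      using J2 by blast
  qed
  then show "\<exists>J. GV_ideal J \<and> (\<forall>r\<in>J. \<exists>a. \<forall>x\<in>K. sC r (h x) = (\<Sum>i<n. sC (x i) (a i)))"
    using finish[OF mC J1] by blast
qed

theorem lemma2p12:
  fixes sA :: "'r::comm_ring_1 \<Rightarrow> 'a::ab_group_add \<Rightarrow> 'a"
    and sB :: "'r \<Rightarrow> 'b::ab_group_add \<Rightarrow> 'b"
    and sC :: "'r \<Rightarrow> 'c::ab_group_add \<Rightarrow> 'c"
    and f :: "'a \<Rightarrow> 'b" and g :: "'b \<Rightarrow> 'c"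
  assumes "coherent_ring TYPE('r)"
    and "module sA" and "module sB" and "module sC"
    and "module_hom sA sB f" and "module_hom sB sC g"
    and "inj f" and "surj g" and "range f = {b. g b = 0}"
    and "abs_w_pure sA"
  shows "abs_w_pure sB \<longleftrightarrow> abs_w_pure sC"
proof
  assume "abs_w_pure sB"
  then show "abs_w_pure sC" by (rule dir_BC[OF assms(1-10)])
next
  assume "abs_w_pure sC"
  then show "abs_w_pure sB" by (rule dir_CB[OF assms(2-10)])
qed

end
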